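(* Let $\alpha,\beta$ be $H$-colorings of $G$ and $q\in V(G)$. If $Q\in\pi(H)$ is realizable for $\alpha,\beta,q$, then $Q$ is topologically valid for $\alpha,\beta,q$.
   Context: All graphs are finite and undirected. $G$ is a connected loopless graph with at least one edge. $H$ is a connected graph with at least one edge, possibly with loops, having the monochromatic neighborhood property: for all $a,b\in V(H)$, $|N_H(a)\cap N_H(b)|\le 1$, where $N_H(a)=\{w: aw\in E(H)\}$. An $H$-coloring of $G$ is a map $\sigma:V(G)\to V(H)$ such that $uv\in E(G)$ implies $\sigma(u)\sigma(v)\in E(H)$. An $H$-recoloring sequence is a sequence $\sigma_0,\dots,\sigma_l$ of $H$-colorings of $G$ in which consecutive colorings differ in the color of exactly one vertex. Walks: an oriented edge is an ordered pair $(x,y)$ with $xy$ an edge; $(x,y)^{-1}=(y,x)$. A walk from $x$ to $y$ is a sequence of oriented edges, consecutive ones sharing endpoints, starting at $x$ and ending at $y$; $\varepsilon$ is the empty walk; $W^{-1}$ the reversed walk; $W_1W_2$ concatenation. A walk is reduced if no two consecutive edges $e_ie_{i+1}$ satisfy $e_{i+1}=e_i^{-1}$; $\overline{W}$ is the unique reduced walk obtained by repeatedly deleting such pairs. $A\cdot B:=\overline{AB}$ for reduced $A,B$ with $B$ starting where $A$ ends. $\pi(H)$ is the set of reduced walks in $H$. For a walk $W=(x_0,x_1)\dots(x_{k-1},x_k)$ in $G$, $\alpha(W)=(\alpha(x_0),\alpha(x_1))\dots(\alpha(x_{k-1}),\alpha(x_k))$. Vertex walks: in a one-step sequence $\sigma_0,\sigma_1$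 where vertex $w$ changes from $a$ to $b\ne a$, all neighbors of $w$ have a common color $h$ (the unique element of $N_H(a)\cap N_H(b)$); set $S(w)=(a,h)(h,b)$ and $S(v)=\varepsilon$ for $v\ne w$. For the empty sequence $S(v)=\varepsilon$; for longer sequences $S(v)$ is the concatenation of the one-step walks in order. Realizable: $Q\in\pi(H)$ is realizable for $\alpha,\beta,q$ if there is an $H$-recoloring sequence $S=\sigma_0,\dots,\sigma_l$ with $\sigma_0=\alpha$, $\sigma_l=\beta$, $\overline{S(q)}=Q$. Topologically valid: a reduced walk $Q$ in $H$ from $\alpha(q)$ to $\beta(q)$ is topologically valid for $\alpha,\beta,q$ if for every closed walk $C$ in $G$ from $q$ to $q$, $\overline{\beta(C)}=Q^{-1}\cdot\overline{\alpha(C)}\cdot Q$. *)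

theory Defs
  imports Main
begin

(* Graphs: vertex set = the (finite) universe of the vertex type; edges given by a
   symmetric relation E.  Oriented edges are pairs; walks are lists of oriented edges. *)

type_synonym 'a oedge = "'a \<times> 'a"
type_synonym 'a walk = "'a oedge list"

definition sym_graph :: "('a \<Rightarrow> 'a \<Rightarrow> bool) \<Rightarrow> bool" where
  "sym_graph E \<longleftrightarrow> (\<forall>x y. E x y \<longrightarrow> E y x)"

definition loopless :: "('a \<Rightarrow> 'a \<Rightarrow> bool) \<Rightarrow> bool" where
  "loopless E \<longleftrightarrow> (\<forall>x. \<not> E x x)"

definition connected_graph :: "('a \<Rightarrow> 'a \<Rightarrow> bool) \<Rightarrow> bool" where
  "connected_graph E \<longleftrightarrow> (\<forall>x y. E\<^sup>*\<^sup>* x y)"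

definition has_edge :: "('a \<Rightarrow> 'a \<Rightarrow> bool) \<Rightarrow> bool" where
  "has_edge E \<longleftrightarrow> (\<exists>x y. E x y)"

definition nbhd :: "('a \<Rightarrow> 'a \<Rightarrow> bool) \<Rightarrow> 'a \<Rightarrow> 'a set" where
  "nbhd E a = {w. E a w}"

definition mono_nbhd :: "('a \<Rightarrow> 'a \<Rightarrow> bool) \<Rightarrow> bool" where
  "mono_nbhd E \<longleftrightarrow> (\<forall>a b. a \<noteq> b \<longrightarrow> card (nbhd E a \<inter> nbhd E b) \<le> 1)"

definition hom :: "('v \<Rightarrow> 'v \<Rightarrow> bool) \<Rightarrow> ('h \<Rightarrow> 'h \<Rightarrow> bool) \<Rightarrow> ('v \<Rightarrow> 'h) \<Rightarrow> bool" where
  "hom EG EH \<sigma> \<longleftrightarrow> (\<forall>u v. EG u v \<longrightarrow> EH (\<sigma> u) (\<sigma> v))"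

inductive walk :: "('a \<Rightarrow> 'a \<Rightarrow> bool) \<Rightarrow> 'a \<Rightarrow> 'a walk \<Rightarrow> 'a \<Rightarrow> bool" for E where
  walk_Nil: "walk E x [] x"
| walk_Cons: "E x z \<Longrightarrow> walk E z W y \<Longrightarrow> walk E x ((x, z) # W) y"

definition inv_edge :: "'a oedge \<Rightarrow> 'a oedge" where
  "inv_edge e = (snd e, fst e)"

definition inv_walk :: "'a walk \<Rightarrow> 'a walk" where
  "inv_walk W = rev (map inv_edge W)"

definition reduced :: "'a walk \<Rightarrow> bool" where
  "reduced W \<longleftrightarrow> (\<forall>i. Suc i < length W \<longrightarrow> W ! Suc i \<noteq> inv_edge (W ! i))"

inductive del_step :: "'a walk \<Rightarrow> 'a walk \<Rightarrow> bool" where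
  "del_step (A @ [e, inv_edge e] @ B) (A @ B)"

definition reduce :: "'a walk \<Rightarrow> 'a walk" where
  "reduce W = (THE R. reduced R \<and> del_step\<^sup>*\<^sup>* W R)"

definition wprod :: "'a walk \<Rightarrow> 'a walk \<Rightarrow> 'a walk" (infixl "\<cdot>" 70) where
  "A \<cdot> B = reduce (A @ B)"

definition reduced_walks :: "('a \<Rightarrow> 'a \<Rightarrow> bool) \<Rightarrow> 'a walk set" where
  "reduced_walks E = {W. reduced W \<and> (\<exists>x y. walk E x W y)}"

definition map_walk :: "('v \<Rightarrow> 'h) \<Rightarrow> 'v walk \<Rightarrow> 'h walk" where
  "map_walk \<alpha> W = map (\<lambda>(x, y). (\<alpha> x, \<alpha> y)) W"

definition recoloring_seq ::
  "('v \<Rightarrow> 'v \<Rightarrow> bool) \<Rightarrow> ('h \<Rightarrow> 'h \<Rightarrow> bool) \<Rightarrow> ('v \<Rightarrow> 'h) list \<Rightarrow> bool" where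
  "recoloring_seq EG EH S \<longleftrightarrow> S \<noteq> [] \<and> (\<forall>\<sigma>\<in>set S. hom EG EH \<sigma>) \<and>
     (\<forall>i. Suc i < length S \<longrightarrow> (\<exists>!w. (S ! i) w \<noteq> (S ! Suc i) w))"

definition step_walk ::
  "('h \<Rightarrow> 'h \<Rightarrow> bool) \<Rightarrow> ('v \<Rightarrow> 'h) \<Rightarrow> ('v \<Rightarrow> 'h) \<Rightarrow> 'v \<Rightarrow> 'h walk" where
  "step_walk EH \<sigma>0 \<sigma>1 v =
     (if \<sigma>0 v = \<sigma>1 v then []
      else (let a = \<sigma>0 v; b = \<sigma>1 v; h = (THE h. h \<in> nbhd EH a \<inter> nbhd EH b)
            in [(a, h), (h, b)]))"

fun vertex_walk :: "('h \<Rightarrow> 'h \<Rightarrow> bool) \<Rightarrow> ('v \<Rightarrow> 'h) list \<Rightarrow> 'v \<Rightarrow> 'h walk" where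
  "vertex_walk EH (\<sigma>0 # \<sigma>1 # S) v = step_walk EH \<sigma>0 \<sigma>1 v @ vertex_walk EH (\<sigma>1 # S) v"
| "vertex_walk EH _ v = []"

definition realizable ::
  "('v \<Rightarrow> 'v \<Rightarrow> bool) \<Rightarrow> ('h \<Rightarrow> 'h \<Rightarrow> bool) \<Rightarrow> 'h walk \<Rightarrow> ('v \<Rightarrow> 'h) \<Rightarrow> ('v \<Rightarrow> 'h) \<Rightarrow> 'v \<Rightarrow> bool" where
  "realizable EG EH Q \<alpha> \<beta> q \<longleftrightarrow>
     (\<exists>S. recoloring_seq EG EH S \<and> hd S = \<alpha> \<and> last S = \<beta> \<and> reduce (vertex_walk EH S q) = Q)"

definition topologically_valid ::
  "('v \<Rightarrow> 'v \<Rightarrow> bool) \<Rightarrow> ('h \<Rightarrow> 'h \<Rightarrow> bool) \<Rightarrow> 'h walk \<Rightarrow> ('v \<Rightarrow> 'h) \<Rightarrow> ('v \<Rightarrow> 'h) \<Rightarrow> 'v \<Rightarrow> bool" where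
  "topologically_valid EG EH Q \<alpha> \<beta> q \<longleftrightarrow>
     reduced Q \<and> walk EH (\<alpha> q) Q (\<beta> q) \<and>
     (\<forall>C. walk EG q C q \<longrightarrow>
        reduce (map_walk \<beta> C) = (inv_walk Q \<cdot> reduce (map_walk \<alpha> C)) \<cdot> Q)"

end

theory Submission
  imports Defs
begin

lemma inv_inv[simp]: "inv_edge (inv_edge e) = e"
  by (simp add: inv_edge_def)

fun cr :: "'a oedge \<Rightarrow> 'a walk \<Rightarrow> 'a walk" where
  "cr e [] = [e]"
| "cr e (f # R) = (if f = inv_edge e then R else e # f # R)"

fun red :: "'a walk \<Rightarrow> 'a walk" where
  "red [] = []"
| "red (e # W) = cr e (red W)"

lemma reduced_Nil[simp]: "reduced []" and reduced_single[simp]: "reduced [e]"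
  by (auto simp: reduced_def)

lemma reduced_Cons2[simp]: "reduced (e # f # R) \<longleftrightarrow> f \<noteq> inv_edge e \<and> reduced (f # R)"
proof
  assume r: "reduced (e # f # R)"
  show "f \<noteq> inv_edge e \<and> reduced (f # R)"
  proof
    show "f \<noteq> inv_edge e" using r[unfolded reduced_def, rule_format, of 0] by simp
    show "reduced (f # R)" unfolding reduced_def
    proof (intro allI impI)
      fix i assume "Suc i < length (f # R)"
      then show "(f # R) ! Suc i \<noteq> inv_edge ((f # R) ! i)"
        using r[unfolded reduced_def, rule_format, of "Suc i"] by simp
    qed
  qed
next
  assume a: "f \<noteq> inv_edge e \<and> reduced (f # R)"
  show "reduced (e # f # R)" unfolding reduced_def
  proof (intro allI impI)
    fix i assume i: "Suc i < length (e # f # R)"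
    show "(e # f # R) ! Suc i \<noteq> inv_edge ((e # f # R) ! i)"
    proof (cases i)
      case 0 then show ?thesis using a by simp
    next
      case (Suc j) then show ?thesis
        using a[THEN conjunct2, unfolded reduced_def, rule_format, of j] i by simp
    qed
  qed
qed

lemma reduced_tl: "reduced (e # R) \<Longrightarrow> reduced R"
  by (cases R) auto

lemma cr_reduced: "reduced R \<Longrightarrow> reduced (cr e R)"
  by (cases R) (auto dest: reduced_tl)

lemma reduced_red: "reduced (red W)"
  by (induction W) (auto intro: cr_reduced)

lemma cr_cancel: "reduced R \<Longrightarrow> cr e (cr (inv_edge e) R) = R"
proof (cases R)
  case Nil then show ?thesis by simp
next
  case (Cons f R')
  assume r: "reduced R"
  show ?thesis
  proof (cases "f = e")
    case True
    then show ?thesis using r Cons by (cases R') auto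
  next
    case False
    then show ?thesis using Cons by auto
  qed
qed

lemma red_append: "red (A @ B) = foldr cr A (red B)"
  by (induction A) auto

lemma red_reduced_id: "reduced R \<Longrightarrow> red R = R"
proof (induction R)
  case Nil then show ?case by simp
next
  case (Cons e R)
  then have "red R = R" using reduced_tl by blast
  then show ?case using Cons.prems by (cases R) auto
qed

lemma del_step_ctx: "del_step W W' \<Longrightarrow> del_step (X @ W @ Z) (X @ W' @ Z)"
proof (induction rule: del_step.induct)
  case (1 A e B)
  have "del_step ((X @ A) @ [e, inv_edge e] @ (B @ Z)) ((X @ A) @ (B @ Z))"
    by (rule del_step.intros)
  then show ?case by simp
qed

lemma star_ctx: "del_step\<^sup>*\<^sup>* W W' \<Longrightarrow> del_step\<^sup>*\<^sup>* (X @ W @ Z) (X @ W' @ Z)"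
proof (induction rule: rtranclp_induct)
  case base then show ?case by simp
next
  case (step y z) then show ?case
    by (meson del_step_ctx rtranclp.rtrancl_into_rtrancl)
qed

lemma red_step: "del_step W W' \<Longrightarrow> red W = red W'"
proof (induction rule: del_step.induct)
  case (1 A e B)
  have "red ([e, inv_edge e] @ B) = red B"
    using cr_cancel[OF reduced_red[of B], of e] by simp
  then show ?case by (simp add: red_append)
qed

lemma red_star: "del_step\<^sup>*\<^sup>* W W' \<Longrightarrow> red W = red W'"
  by (induction rule: rtranclp_induct) (auto dest: red_step)

lemma star_red: "del_step\<^sup>*\<^sup>* W (red W)"
proof (induction W)
  case Nil then show ?case by simp
next
  case (Cons e W)
  have 1: "del_step\<^sup>*\<^sup>* (e # W) (e # red W)"
    using star_ctx[OF Cons, of "[e]" "[]"] by simp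
  show ?case
  proof (cases "red W")
    case Nil then show ?thesis using 1 by simp
  next
    case (Cons f R)
    show ?thesis
    proof (cases "f = inv_edge e")
      case True
      have "del_step ([] @ [e, inv_edge e] @ R) ([] @ R)" by (rule del_step.intros)
      then have "del_step (e # red W) R" using Cons True by simp
      then show ?thesis using 1 Cons True by simp
    next
      case False then show ?thesis using 1 Cons by simp
    qed
  qed
qed

lemma reduce_eq: "reduce W = red W"
  unfolding reduce_def
proof (rule the_equality)
  show "reduced (red W) \<and> del_step\<^sup>*\<^sup>* W (red W)" using reduced_red star_red by blast
next
  fix R assume "reduced R \<and> del_step\<^sup>*\<^sup>* W R"
  then show "R = red W" using red_star red_reduced_id by metis
qed

lemma red_mid: "red (X @ Y @ Z) = red (X @ red Y @ Z)"
  by (rule red_star[OF star_ctx[OF star_red]])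

lemma red_red[simp]: "red (red W) = red W"
  by (simp add: red_reduced_id reduced_red)

lemma inv_walk_append[simp]: "inv_walk (A @ B) = inv_walk B @ inv_walk A"
  by (simp add: inv_walk_def)
lemma inv_walk_Nil[simp]: "inv_walk [] = []"
  by (simp add: inv_walk_def)
lemma inv_walk_Cons[simp]: "inv_walk (e # W) = inv_walk W @ [inv_edge e]"
  by (simp add: inv_walk_def)

lemma red_inv_cancel: "red (inv_walk W @ W) = []"
proof (induction W)
  case Nil then show ?case by simp
next
  case (Cons e W)
  have "del_step (inv_walk W @ [inv_edge e, inv_edge (inv_edge e)] @ W) (inv_walk W @ W)"
    by (rule del_step.intros)
  then have "red (inv_walk (e # W) @ e # W) = red (inv_walk W @ W)"
    using red_step by fastforce
  then show ?case using Cons by simp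
qed

lemma inv_walk_inv[simp]: "inv_walk (inv_walk W) = W"
  by (simp add: inv_walk_def rev_map comp_def)

lemma red_cancel_inv: "red (W @ inv_walk W) = []"
  using red_inv_cancel[of "inv_walk W"] by simp

lemma del_step_inv: "del_step W W' \<Longrightarrow> del_step (inv_walk W) (inv_walk W')"
proof (induction rule: del_step.induct)
  case (1 A e B)
  have "del_step (inv_walk B @ [e, inv_edge e] @ inv_walk A) (inv_walk B @ inv_walk A)"
    by (rule del_step.intros)
  then show ?case by simp
qed

lemma star_inv: "del_step\<^sup>*\<^sup>* W W' \<Longrightarrow> del_step\<^sup>*\<^sup>* (inv_walk W) (inv_walk W')"
  by (induction rule: rtranclp_induct) (auto intro: rtranclp.rtrancl_into_rtrancl del_step_inv)

lemma red_inv_red: "red (inv_walk (red W)) = red (inv_walk W)"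
  using red_star[OF star_inv[OF star_red[of W]]] by simp

lemma walk_Cons_iff: "walk E x ((a, b) # W) y \<longleftrightarrow> a = x \<and> E x b \<and> walk E b W y"
  by (auto elim: walk.cases intro: walk.intros)

lemma walk_Nil_iff[simp]: "walk E x [] y \<longleftrightarrow> x = y"
  by (auto elim: walk.cases intro: walk.intros)

lemma walk_append: "walk E x (A @ B) y \<longleftrightarrow> (\<exists>z. walk E x A z \<and> walk E z B y)"
proof (induction A arbitrary: x)
  case Nil then show ?case by simp
next
  case (Cons e A)
  obtain a b where e: "e = (a, b)" by fastforce
  show ?case using Cons by (simp add: e walk_Cons_iff)
qed

lemma walk_step: "del_step W W' \<Longrightarrow> walk E x W y \<Longrightarrow> walk E x W' y"
proof (induction rule: del_step.induct)
  case (1 A e B)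
  obtain a b where e: "e = (a, b)" by fastforce
  from 1 show ?case
    by (auto simp: walk_append e inv_edge_def walk_Cons_iff)
qed

lemma walk_red: "walk E x W y \<Longrightarrow> walk E x (red W) y"
proof -
  have "del_step\<^sup>*\<^sup>* W W' \<Longrightarrow> walk E x W y \<Longrightarrow> walk E x W' y" for W'
    by (induction rule: rtranclp_induct) (auto intro: walk_step)
  then show "walk E x W y \<Longrightarrow> walk E x (red W) y" using star_red by blast
qed


lemma the_nb:
  fixes EH :: "'h::finite \<Rightarrow> 'h \<Rightarrow> bool"
  assumes "mono_nbhd EH" "a \<noteq> b" "EH a c" "EH b c"
  shows "(THE h. h \<in> nbhd EH a \<inter> nbhd EH b) = c"
proof (rule the_equality)
  show c: "c \<in> nbhd EH a \<inter> nbhd EH b" using assms by (simp add: nbhd_def)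
  fix h assume h: "h \<in> nbhd EH a \<inter> nbhd EH b"
  have "card (nbhd EH a \<inter> nbhd EH b) \<le> Suc 0" using assms(1,2) by (simp add: mono_nbhd_def)
  then show "h = c" using c h card_le_Suc0_iff_eq[of "nbhd EH a \<inter> nbhd EH b"] by auto
qed

locale step_ctx =
  fixes EG :: "'v \<Rightarrow> 'v \<Rightarrow> bool" and EH :: "'h::finite \<Rightarrow> 'h \<Rightarrow> bool"
    and s0 s1 :: "'v \<Rightarrow> 'h"
  assumes symG: "sym_graph EG" and loopG: "loopless EG" and symH: "sym_graph EH"
    and mono: "mono_nbhd EH" and h0: "hom EG EH s0" and h1: "hom EG EH s1"
    and uniq: "\<And>x y. s0 x \<noteq> s1 x \<Longrightarrow> s0 y \<noteq> s1 y \<Longrightarrow> x = y"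
begin

abbreviation "T \<equiv> step_walk EH s0 s1"

lemma T_diff:
  assumes "EG u v" "s0 u \<noteq> s1 u"
  shows "T u = [(s0 u, s0 v), (s0 v, s1 u)]" "s0 v = s1 v"
proof -
  have uv: "u \<noteq> v" using assms(1) loopG by (auto simp: loopless_def)
  show sv: "s0 v = s1 v" using uniq[of u v] uv assms(2) by blast
  have "EH (s0 u) (s0 v)" using h0 assms(1) by (simp add: hom_def)
  moreover have "EH (s1 u) (s0 v)" using h1 assms(1) sv by (simp add: hom_def)
  ultimately have "(THE h. h \<in> nbhd EH (s0 u) \<inter> nbhd EH (s1 u)) = s0 v"
    using the_nb[OF mono assms(2)] by blast
  then show "T u = [(s0 u, s0 v), (s0 v, s1 u)]"
    using assms(2) by (simp add: step_walk_def Let_def)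
qed

lemma T_same: "s0 u = s1 u \<Longrightarrow> T u = []"
  by (simp add: step_walk_def)

lemma edge_lemma:
  assumes "EG u v"
  shows "red [(s1 u, s1 v)] = red (inv_walk (T u) @ [(s0 u, s0 v)] @ T v)"
proof (cases "s0 u = s1 u")
  case False
  note d = T_diff[OF assms False]
  have "del_step ([(s1 u, s0 v)] @ [(s0 v, s0 u), inv_edge (s0 v, s0 u)] @ [])
      ([(s1 u, s0 v)] @ [])" by (rule del_step.intros)
  then have "red ([(s1 u, s0 v)] @ [(s0 v, s0 u), inv_edge (s0 v, s0 u)] @ [])
      = red ([(s1 u, s0 v)] @ [])" by (rule red_step)
  then show ?thesis using d by (simp add: inv_edge_def T_same)
next
  case True
  note tu = T_same[OF True]
  show ?thesis
  proof (cases "s0 v = s1 v")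
    case True then show ?thesis using tu T_same \<open>s0 u = s1 u\<close> by simp
  next
    case False
    have vu: "EG v u" using assms symG by (simp add: sym_graph_def)
    note d = T_diff[OF vu False]
    have "del_step ([] @ [(s0 u, s0 v), inv_edge (s0 u, s0 v)] @ [(s0 u, s1 v)])
      ([] @ [(s0 u, s1 v)])" by (rule del_step.intros)
    then have "red ([] @ [(s0 u, s0 v), inv_edge (s0 u, s0 v)] @ [(s0 u, s1 v)])
      = red ([] @ [(s0 u, s1 v)])" by (rule red_step)
    then show ?thesis using d tu \<open>s0 u = s1 u\<close> by (simp add: inv_edge_def)
  qed
qed

lemma walk_lemma:
  "walk EG x C y \<Longrightarrow> red (map_walk s1 C) = red (inv_walk (T x) @ map_walk s0 C @ T y)"
proof (induction rule: walk.induct)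
  case (walk_Nil x)
  then show ?case by (simp add: map_walk_def red_inv_cancel)
next
  case (walk_Cons x z W y)
  have "red (map_walk s1 ((x, z) # W)) = red ([(s1 x, s1 z)] @ map_walk s1 W @ [])"
    by (simp add: map_walk_def)
  also have "\<dots> = red ([(s1 x, s1 z)] @ red (inv_walk (T z) @ map_walk s0 W @ T y) @ [])"
    using red_mid walk_Cons.IH by metis
  also have "\<dots> = red ([] @ [(s1 x, s1 z)] @ (inv_walk (T z) @ map_walk s0 W @ T y))"
    using red_mid[of "[(s1 x, s1 z)]" "inv_walk (T z) @ map_walk s0 W @ T y" "[]"] by simp
  also have "\<dots> = red ([] @ red (inv_walk (T x) @ [(s0 x, s0 z)] @ T z) @ (inv_walk (T z) @ map_walk s0 W @ T y))"
    using red_mid edge_lemma[OF walk_Cons.hyps(1)] by metis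
  also have "\<dots> = red ((inv_walk (T x) @ [(s0 x, s0 z)]) @ (T z @ inv_walk (T z)) @ (map_walk s0 W @ T y))"
    using red_mid[of "[]" "inv_walk (T x) @ [(s0 x, s0 z)] @ T z"] by simp
  also have "\<dots> = red ((inv_walk (T x) @ [(s0 x, s0 z)]) @ red (T z @ inv_walk (T z)) @ (map_walk s0 W @ T y))"
    by (rule red_mid)
  also have "\<dots> = red (inv_walk (T x) @ map_walk s0 ((x, z) # W) @ T y)"
    by (simp add: red_cancel_inv map_walk_def)
  finally show ?case .
qed

lemma T_walk:
  assumes "connected_graph EG" "has_edge EG"
  shows "walk EH (s0 x) (T x) (s1 x)"
proof (cases "s0 x = s1 x")
  case True then show ?thesis by (simp add: T_same)
next
  case False
  obtain a b where ab: "EG a b" using assms(2) by (auto simp: has_edge_def)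
  have "\<exists>z. EG x z"
  proof (cases "x = a")
    case True then show ?thesis using ab by blast
  next
    case False
    have "EG\<^sup>*\<^sup>* x a" using assms(1) by (simp add: connected_graph_def)
    then show ?thesis using False by (metis converse_rtranclpE)
  qed
  then obtain z where z: "EG x z" by blast
  note d = T_diff[OF z False]
  have "EH (s0 x) (s0 z)" using h0 z by (simp add: hom_def)
  moreover have "EH (s1 x) (s0 z)" using h1 z d(2) by (simp add: hom_def)
  then have "EH (s0 z) (s1 x)" using symH by (simp add: sym_graph_def)
  ultimately show ?thesis using d(1) by (simp add: walk_Cons_iff)
qed

end


lemma seq_lemma:
  fixes EG :: "'v \<Rightarrow> 'v \<Rightarrow> bool" and EH :: "'h::finite \<Rightarrow> 'h \<Rightarrow> bool"
  assumes symG: "sym_graph EG" and loopG: "loopless EG" and symH: "sym_graph EH"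
    and mono: "mono_nbhd EH" and con: "connected_graph EG" and he: "has_edge EG"
  shows "recoloring_seq EG EH S \<Longrightarrow> walk EG x C y \<Longrightarrow>
    red (map_walk (last S) C) = red (inv_walk (vertex_walk EH S x) @ map_walk (hd S) C @ vertex_walk EH S y)
    \<and> walk EH (hd S x) (vertex_walk EH S x) (last S x)"
proof (induction S)
  case Nil then show ?case by (simp add: recoloring_seq_def)
next
  case (Cons s0 S)
  show ?case
  proof (cases S)
    case Nil then show ?thesis by simp
  next
    case (Cons s1 S')
    have rs: "recoloring_seq EG EH (s0 # s1 # S')" using Cons.prems(1) Cons by simp
    have rs': "recoloring_seq EG EH (s1 # S')"
    proof -
      have "\<forall>i. Suc i < length (s0 # s1 # S') \<longrightarrow> (\<exists>!w. ((s0 # s1 # S') ! i) w \<noteq> ((s0 # s1 # S') ! Suc i) w)"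
        using rs by (simp add: recoloring_seq_def)
      then have "\<forall>i. Suc i < length (s1 # S') \<longrightarrow> (\<exists>!w. ((s1 # S') ! i) w \<noteq> ((s1 # S') ! Suc i) w)"
        by (metis Suc_less_eq length_Cons nth_Cons_Suc)
      then show ?thesis using rs by (simp add: recoloring_seq_def)
    qed
    have hom0: "hom EG EH s0" and hom1: "hom EG EH s1" using rs by (auto simp: recoloring_seq_def)
    have ex1: "\<exists>!w. s0 w \<noteq> s1 w"
      using rs[unfolded recoloring_seq_def, THEN conjunct2, THEN conjunct2, rule_format, of 0] by simp
    interpret step_ctx EG EH s0 s1
      by unfold_locales (use symG loopG symH mono hom0 hom1 ex1 in auto)
    have IH: "red (map_walk (last (s1 # S')) C) =
        red (inv_walk (vertex_walk EH (s1 # S') x) @ map_walk s1 C @ vertex_walk EH (s1 # S') y)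
      \<and> walk EH (s1 x) (vertex_walk EH (s1 # S') x) (last (s1 # S') x)"
      using Cons.IH rs' Cons.prems(2) Cons by simp
    define Px where "Px = vertex_walk EH (s1 # S') x"
    define Py where "Py = vertex_walk EH (s1 # S') y"
    have "red (map_walk (last (s0 # S)) C) = red (inv_walk Px @ map_walk s1 C @ Py)"
      using IH Cons by (simp add: Px_def Py_def)
    also have "\<dots> = red (inv_walk Px @ red (inv_walk (T x) @ map_walk s0 C @ T y) @ Py)"
      using red_mid walk_lemma[OF Cons.prems(2)] by metis
    also have "\<dots> = red (inv_walk (T x @ Px) @ map_walk s0 C @ T y @ Py)"
      using red_mid[of "inv_walk Px" "inv_walk (T x) @ map_walk s0 C @ T y" Py] by simp
    finally have 1: "red (map_walk (last (s0 # S)) C) =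
      red (inv_walk (vertex_walk EH (s0 # S) x) @ map_walk (hd (s0 # S)) C @ vertex_walk EH (s0 # S) y)"
      using Cons by (simp add: Px_def Py_def)
    have "walk EH (s0 x) (T x @ Px) (last (s1 # S') x)"
      using T_walk[OF con he, of x] IH by (auto simp: walk_append Px_def)
    then show ?thesis using 1 Cons by (simp add: Px_def)
  qed
qed


theorem mainTheorem3:
  fixes EG :: "'v::finite \<Rightarrow> 'v \<Rightarrow> bool"
    and EH :: "'h::finite \<Rightarrow> 'h \<Rightarrow> bool"
    and \<alpha> \<beta> :: "'v \<Rightarrow> 'h" and q :: 'v and Q :: "'h walk"
  assumes "sym_graph EG" "loopless EG" "connected_graph EG" "has_edge EG"
    and "sym_graph EH" "connected_graph EH" "has_edge EH" "mono_nbhd EH"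
    and "hom EG EH \<alpha>" "hom EG EH \<beta>"
    and "Q \<in> reduced_walks EH"
    and "realizable EG EH Q \<alpha> \<beta> q"
  shows "topologically_valid EG EH Q \<alpha> \<beta> q"
proof -
  obtain S where S: "recoloring_seq EG EH S" "hd S = \<alpha>" "last S = \<beta>"
    and Q: "reduce (vertex_walk EH S q) = Q"
    using assms(12) by (auto simp: realizable_def)
  define P where "P = vertex_walk EH S q"
  have Qr: "Q = red P" using Q by (simp add: reduce_eq P_def)
  note sl = seq_lemma[OF assms(1,2,5,8,3,4) S(1)]
  have "walk EH (\<alpha> q) P (\<beta> q)"
    using sl[OF walk_Nil] S by (simp add: P_def)
  then have w: "walk EH (\<alpha> q) Q (\<beta> q)" unfolding Qr by (rule walk_red)
  have c: "reduce (map_walk \<beta> C) = (inv_walk Q \<cdot> reduce (map_walk \<alpha> C)) \<cdot> Q"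
    if C: "walk EG q C q" for C
  proof -
    have "red (map_walk \<beta> C) = red (inv_walk P @ map_walk \<alpha> C @ P)"
      using sl[OF C] S by (simp add: P_def)
    also have "\<dots> = red ([] @ red (inv_walk P) @ (map_walk \<alpha> C @ P))"
      using red_mid[of "[]" "inv_walk P"] by simp
    also have "\<dots> = red ([] @ red (inv_walk Q) @ (map_walk \<alpha> C @ P))"
      using red_inv_red[of P] Qr by simp
    also have "\<dots> = red ((inv_walk Q @ map_walk \<alpha> C) @ red P @ [])"
      using red_mid[of "[]" "inv_walk Q"] red_mid[of "inv_walk Q @ map_walk \<alpha> C" P "[]"] by simp
    also have "\<dots> = red ((inv_walk Q @ map_walk \<alpha> C) @ Q)" using Qr by simp
    also have "\<dots> = red (inv_walk Q @ red (map_walk \<alpha> C) @ Q)"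
      using red_mid[of "inv_walk Q" "map_walk \<alpha> C" Q] by simp
    also have "\<dots> = red ([] @ red (inv_walk Q @ red (map_walk \<alpha> C)) @ Q)"
      using red_mid[of "[]" "inv_walk Q @ red (map_walk \<alpha> C)" Q] by simp
    finally show ?thesis by (simp add: wprod_def reduce_eq)
  qed
  have "reduced Q" using assms(11) by (simp add: reduced_walks_def)
  then show ?thesis using w c by (simp add: topologically_valid_def)
qed

end
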